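(* Let $\alpha,\beta$ be relatively prime positive integers and let $n$ be a positive integer with $s(n)=s$. Then there exist no integers $a',b'\ge1$ with $n=a'g_s+\beta b'g_{s-1}$. Moreover, a pair $(b,a)$ is $n$-good if and only if $n=ag_{s-1}+\beta b g_{s-2}$ and $a,b\ge1$.
   Context: The $(\alpha,\beta)$-walk $w_k(a_1,a_2)$ for positive integers $a_1,a_2$ is given by $w_1=a_1$, $w_2=a_2$, $w_{k+2}=\alpha w_{k+1}+\beta w_k$ ($k\ge1$). For a positive integer $n$, $s(n;a_1,a_2)$ is the (largest) index $s$ with $w_s(a_1,a_2)=n$ ($-\infty$ if none), and $s(n)=\max_{a_1,a_2\ge1}s(n;a_1,a_2)$. A pair $(a_1,a_2)$ with $a_1,a_2\ge1$ is $n$-good if $s(n;a_1,a_2)=s(n)$. The sequence $g_k$: $g_0=0$, $g_1=1$, $g_2=\alpha$, $g_{k+2}=\alpha g_{k+1}+\beta g_k$ for $k\ge1$. *)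

theory Defs
  imports Main
begin

fun gseq :: "nat \<Rightarrow> nat \<Rightarrow> nat \<Rightarrow> nat" where
  "gseq \<alpha> \<beta> 0 = 0"
| "gseq \<alpha> \<beta> (Suc 0) = 1"
| "gseq \<alpha> \<beta> (Suc (Suc k)) = \<alpha> * gseq \<alpha> \<beta> (Suc k) + \<beta> * gseq \<alpha> \<beta> k"

text \<open>The (alpha,beta)-walk w_k(a1,a2), indexed from k = 1 (the value at index 0 is a dummy).\<close>
fun walk :: "nat \<Rightarrow> nat \<Rightarrow> nat \<Rightarrow> nat \<Rightarrow> nat \<Rightarrow> nat" where
  "walk \<alpha> \<beta> a1 a2 0 = 0"
| "walk \<alpha> \<beta> a1 a2 (Suc 0) = a1"
| "walk \<alpha> \<beta> a1 a2 (Suc (Suc 0)) = a2"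
| "walk \<alpha> \<beta> a1 a2 (Suc (Suc (Suc k))) =
     \<alpha> * walk \<alpha> \<beta> a1 a2 (Suc (Suc k)) + \<beta> * walk \<alpha> \<beta> a1 a2 (Suc k)"

text \<open>s(n;a1,a2): largest index s \<ge> 1 with w_s = n; None plays the role of -infinity.\<close>
definition s_pair :: "nat \<Rightarrow> nat \<Rightarrow> nat \<Rightarrow> nat \<Rightarrow> nat \<Rightarrow> nat option" where
  "s_pair \<alpha> \<beta> n a1 a2 =
     (if \<exists>k. k \<ge> 1 \<and> walk \<alpha> \<beta> a1 a2 k = n
      then Some (Max {k. k \<ge> 1 \<and> walk \<alpha> \<beta> a1 a2 k = n}) else None)"

definition s_max :: "nat \<Rightarrow> nat \<Rightarrow> nat \<Rightarrow> nat" where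
  "s_max \<alpha> \<beta> n =
     Max {k. \<exists>a1 a2. a1 \<ge> 1 \<and> a2 \<ge> 1 \<and> k \<ge> 1 \<and> walk \<alpha> \<beta> a1 a2 k = n}"

definition good :: "nat \<Rightarrow> nat \<Rightarrow> nat \<Rightarrow> nat \<Rightarrow> nat \<Rightarrow> bool" where
  "good \<alpha> \<beta> n a1 a2 \<longleftrightarrow>
     a1 \<ge> 1 \<and> a2 \<ge> 1 \<and> s_pair \<alpha> \<beta> n a1 a2 = Some (s_max \<alpha> \<beta> n)"

end

theory Submission
  imports Defs
begin

lemma walk_formula:
  "k \<ge> 2 \<Longrightarrow> walk \<alpha> \<beta> a1 a2 k = a2 * gseq \<alpha> \<beta> (k-1) + \<beta> * a1 * gseq \<alpha> \<beta> (k-2)"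
proof (induction \<alpha> \<beta> a1 a2 k rule: walk.induct)
  case (4 \<alpha> \<beta> a1 a2 k)
  show ?case
  proof (cases k)
    case 0 then show ?thesis by simp
  next
    case (Suc m)
    have h1: "walk \<alpha> \<beta> a1 a2 (Suc (Suc k)) = a2 * gseq \<alpha> \<beta> (Suc k) + \<beta> * a1 * gseq \<alpha> \<beta> k"
      using 4 by simp
    have h2: "walk \<alpha> \<beta> a1 a2 (Suc k) = a2 * gseq \<alpha> \<beta> k + \<beta> * a1 * gseq \<alpha> \<beta> m"
      using 4 Suc by simp
    show ?thesis using Suc h1 h2 by (simp add: algebra_simps)
  qed
qed auto

lemma gseq_pos: "\<alpha> \<ge> 1 \<Longrightarrow> \<beta> \<ge> 1 \<Longrightarrow> k \<ge> 1 \<Longrightarrow> gseq \<alpha> \<beta> k \<ge> 1"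
proof (induction \<alpha> \<beta> k rule: gseq.induct)
  case (3 \<alpha> \<beta> k)
  have "gseq \<alpha> \<beta> (Suc k) \<ge> 1" using 3 by simp
  hence "\<alpha> * gseq \<alpha> \<beta> (Suc k) \<ge> 1 * 1" using 3 by (intro mult_le_mono) auto
  thus ?case by (metis gseq.simps(3) mult_1 trans_le_add1)
qed auto

lemma gseq_ge: "\<alpha> \<ge> 1 \<Longrightarrow> \<beta> \<ge> 1 \<Longrightarrow> gseq \<alpha> \<beta> k \<ge> k - 1"
proof (induction \<alpha> \<beta> k rule: gseq.induct)
  case (3 \<alpha> \<beta> k)
  show ?case
  proof (cases k)
    case 0 then show ?thesis using 3 by simp
  next
    case (Suc m)
    have a: "gseq \<alpha> \<beta> (Suc k) \<ge> k" using 3 by simp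
    have b: "gseq \<alpha> \<beta> k \<ge> 1" using 3 Suc
      using gseq_pos by simp
    have c: "\<alpha> * gseq \<alpha> \<beta> (Suc k) \<ge> 1 * gseq \<alpha> \<beta> (Suc k)" using 3 by (intro mult_le_mono1) auto
    have d: "\<beta> * gseq \<alpha> \<beta> k \<ge> 1 * 1" using 3 b by (intro mult_le_mono) auto
    have e: "gseq \<alpha> \<beta> (Suc (Suc k)) = \<alpha> * gseq \<alpha> \<beta> (Suc k) + \<beta> * gseq \<alpha> \<beta> k" by simp
    show ?thesis using a c d e by linarith
  qed
qed auto

lemma walk_bound:
  assumes "\<alpha> \<ge> 1" "\<beta> \<ge> 1" "a1 \<ge> 1" "a2 \<ge> 1" "k \<ge> 1" "walk \<alpha> \<beta> a1 a2 k = n"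
  shows "k \<le> n + 2"
proof (cases "k \<ge> 2")
  case True
  have x: "walk \<alpha> \<beta> a1 a2 k \<ge> a2 * gseq \<alpha> \<beta> (k-1)" using walk_formula[OF True] by simp
  have y: "a2 * gseq \<alpha> \<beta> (k-1) \<ge> 1 * gseq \<alpha> \<beta> (k-1)" using assms by (intro mult_le_mono1) auto
  have z: "gseq \<alpha> \<beta> (k-1) \<ge> k - 1 - 1" using gseq_ge[OF assms(1,2), of "k-1"] by simp
  show ?thesis using x y z assms(6) by linarith
next
  case False then show ?thesis by simp
qed

theorem corollary2p3:
  fixes \<alpha> \<beta> n :: nat
  assumes "\<alpha> \<ge> 1" and "\<beta> \<ge> 1" and "coprime \<alpha> \<beta>" and "n \<ge> 1"
  shows "let s = s_max \<alpha> \<beta> n in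
     (\<not> (\<exists>a' b'. a' \<ge> 1 \<and> b' \<ge> 1 \<and>
             n = a' * gseq \<alpha> \<beta> s + \<beta> * b' * gseq \<alpha> \<beta> (s - 1))) \<and>
     (\<forall>a b. good \<alpha> \<beta> n b a \<longleftrightarrow>
             (n = a * gseq \<alpha> \<beta> (s - 1) + \<beta> * b * gseq \<alpha> \<beta> (s - 2) \<and> a \<ge> 1 \<and> b \<ge> 1))"
proof -
  define S where "S = {k. \<exists>a1 a2. a1 \<ge> 1 \<and> a2 \<ge> 1 \<and> k \<ge> 1 \<and> walk \<alpha> \<beta> a1 a2 k = n}"
  define s where "s = s_max \<alpha> \<beta> n"
  have sS: "s = Max S" unfolding s_def S_def s_max_def by simp
  have finS: "finite S"
  proof (rule finite_subset[of _ "{..n+2}"])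
    show "S \<subseteq> {..n+2}" unfolding S_def using walk_bound[OF assms(1,2)] by auto
  qed simp
  have "2 \<in> S" unfolding S_def using assms(4)
    by (intro CollectI exI[of _ 1] exI[of _ n]) (simp add: numeral_2_eq_2)
  hence s2: "s \<ge> 2" using sS finS by (metis Max_ge)
  have smax: "\<And>k. k \<in> S \<Longrightarrow> k \<le> s" using sS finS by simp
  have sin: "s \<in> S" using sS finS \<open>2 \<in> S\<close> by (metis Max_in empty_iff)
  have part1: "\<not> (\<exists>a' b'. a' \<ge> 1 \<and> b' \<ge> 1 \<and>
             n = a' * gseq \<alpha> \<beta> s + \<beta> * b' * gseq \<alpha> \<beta> (s - 1))"
  proof
    assume "\<exists>a' b'. a' \<ge> 1 \<and> b' \<ge> 1 \<and> n = a' * gseq \<alpha> \<beta> s + \<beta> * b' * gseq \<alpha> \<beta> (s - 1)"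
    then obtain a' b' where h: "a' \<ge> 1" "b' \<ge> 1" "n = a' * gseq \<alpha> \<beta> s + \<beta> * b' * gseq \<alpha> \<beta> (s - 1)"
      by blast
    have "walk \<alpha> \<beta> b' a' (s+1) = n" using walk_formula[of "s+1"] s2 h by simp
    hence "s + 1 \<in> S" unfolding S_def using h by auto
    thus False using smax by fastforce
  qed
  have part2: "good \<alpha> \<beta> n b a \<longleftrightarrow>
       (n = a * gseq \<alpha> \<beta> (s - 1) + \<beta> * b * gseq \<alpha> \<beta> (s - 2) \<and> a \<ge> 1 \<and> b \<ge> 1)" for a b
  proof -
    define T where "T = {k. k \<ge> 1 \<and> walk \<alpha> \<beta> b a k = n}"
    have wf: "walk \<alpha> \<beta> b a s = a * gseq \<alpha> \<beta> (s - 1) + \<beta> * b * gseq \<alpha> \<beta> (s - 2)"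
      using walk_formula[OF s2] by simp
    show ?thesis
    proof
      assume g: "good \<alpha> \<beta> n b a"
      hence ab: "a \<ge> 1" "b \<ge> 1" and sp: "s_pair \<alpha> \<beta> n b a = Some s"
        unfolding good_def s_def by auto
      have ex: "\<exists>k. k \<ge> 1 \<and> walk \<alpha> \<beta> b a k = n"
        using sp unfolding s_pair_def by (auto split: if_splits)
      hence "Max T = s" using sp unfolding s_pair_def T_def by simp
      moreover have "T \<subseteq> S" unfolding T_def S_def using ab by auto
      hence "finite T" using finS finite_subset by blast
      moreover have "T \<noteq> {}" using ex unfolding T_def by auto
      ultimately have "s \<in> T" using Max_in by metis
      hence "walk \<alpha> \<beta> b a s = n" unfolding T_def by simp
      thus "n = a * gseq \<alpha> \<beta> (s - 1) + \<beta> * b * gseq \<alpha> \<beta> (s - 2) \<and> a \<ge> 1 \<and> b \<ge> 1"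
        using wf ab by simp
    next
      assume h: "n = a * gseq \<alpha> \<beta> (s - 1) + \<beta> * b * gseq \<alpha> \<beta> (s - 2) \<and> a \<ge> 1 \<and> b \<ge> 1"
      hence sT: "s \<in> T" unfolding T_def using wf s2 by simp
      have "T \<subseteq> S" unfolding T_def S_def using h by auto
      hence finT: "finite T" using finS finite_subset by blast
      have "\<forall>k\<in>T. k \<le> s" using \<open>T \<subseteq> S\<close> smax by auto
      hence "Max T \<le> s" using finT sT by (subst Max_le_iff) auto
      hence "Max T = s" using finT sT Max_ge by (metis antisym)
      moreover have "\<exists>k. k \<ge> 1 \<and> walk \<alpha> \<beta> b a k = n" using sT unfolding T_def by blast
      ultimately have "s_pair \<alpha> \<beta> n b a = Some s" unfolding s_pair_def T_def by simp
      thus "good \<alpha> \<beta> n b a" unfolding good_def s_def using h by simp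
    qed
  qed
  show ?thesis unfolding Let_def s_def[symmetric] using part1 part2 by blast
qed

end
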